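(* Let $p,q\ge2$ be coprime integers, $c=c_{p,q}$, $t=-q/p$, and let $0<k,r<p$, $0<l,s<q$ be integers and $h\in\mathbb C$. Let $\sigma=\sum_{j_1\ge\dots\ge j_u\ge1,\ j_1+\dots+j_u=rs}\rho_{j_1,\dots,j_u}L_{-j_1}\cdots L_{-j_u}\in U(\mathfrak{vir})$ (with $\rho_{j_1,\dots,j_u}\in\mathbb C$) be such that $\sigma v$ is a nonzero singular vector of the Verma module $M^c_{h_{r,s}}$, $v$ its highest weight vector. Define $\rho(\lambda,\mu)\in\mathbb C$ by $\sigma f_0=\rho(\lambda,\mu)f_{rs}$ in the Witt-algebra module $\mathcal F_{\lambda,\mu}$, where each $L_{-j}$ acts as $l_{-j}$. If there exists a nonzero intertwining operator of type $\binom{L^c_h}{L^c_{h_{k,l}}\ L^c_{h_{r,s}}}$, then $$\rho\big(-h_{k,l},\ h_{r,s}-h-h_{k,l}\big)=0.$$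
   Context: The Virasoro algebra $\mathfrak{vir}=\bigoplus_{n\in\mathbb Z}\mathbb CL_n\oplus\mathbb CC$ has brackets $[L_n,L_m]=(n-m)L_{n+m}+\frac{n^3-n}{12}\delta_{n,-m}C$, $C$ central. $\mathrm{Vir}^c$ is the universal Virasoro vertex algebra of central charge $c$ (vacuum $\mathbf1$, $T=L_{-1}$, conformal vector $L_{-2}\mathbf1$ with field $\sum_nL_nz^{-n-2}$). The Verma module $M^c_h=U(\mathfrak{vir})\otimes_{U(\bigoplus_{n\ge0}\mathbb CL_n\oplus\mathbb CC)}\mathbb Cm$ ($Cm=cm$, $L_0m=hm$, $L_nm=0$, $n\ge1$); a singular vector is a vector $w$ with $L_nw=0$ for all $n>0$ and $L_0w\in\mathbb Cw$. $L^c_h$ is the unique irreducible quotient of $M^c_h$, a $\mathrm{Vir}^c$-module with $T=L_{-1}$. $c_{p,q}=1-\frac{6(p-q)^2}{pq}$, $h_{k,l}=\frac{(lp-kq)^2-(p-q)^2}{4pq}$. The Witt algebra is $\bigoplus_{n\in\mathbb Z}\mathbb Cl_n$ with $[l_n,l_m]=(n-m)l_{n+m}$; for $\lambda,\mu\in\mathbb C$, $\mathcal F_{\lambda,\mu}$ is the Witt module with basis $f_j$ ($j\in\mathbb Z$) and $l_{-i}f_j=(\mu+j-\lambda(i+1))f_{j+i}$. An intertwining operator of type $\binom{M_3}{M_1\ M_2}$ between $\mathrm{Vir}^c$-modules is a linear map $a\mapsto\mathcal Y(a,z)=\sum_{n\in\mathbb C}a_{(n)}z^{-n-1}$ from $M_1$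 to $\mathrm{Hom}(M_2,M_3[[z]]z^{-S})$ (for some $S\subset\mathbb C$ with $S+\mathbb Z=S$, $S/\mathbb Z$ finite; formal sums $\sum_nf_nz^n$ with $n$ in a finite union of sets $-d+\mathbb Z_{\ge0}$, $d\in S$) such that $T\mathcal Y(a,z)-\mathcal Y(a,z)T=\mathcal Y(Ta,z)=\partial_z\mathcal Y(a,z)$ and for all $v\in\mathrm{Vir}^c$, $a\in M_1$, $b\in M_2$, $n,m\in\mathbb Z$, $k'\in\mathbb C$: $\sum_{j\ge0}(-1)^j\binom nj\big(v_{(m+n-j)}a_{(k'+j)}b-(-1)^na_{(n+k'-j)}v_{(m+j)}b\big)=\sum_{j\ge0}\binom mj(v_{(n+j)}a)_{(m+k'-j)}b$. *)

theory Defs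
  imports Complex_Main "HOL-Library.Nonpos_Ints"
begin

definition cpq :: "nat \<Rightarrow> nat \<Rightarrow> complex" where
  "cpq p q = 1 - 6 * (of_nat p - of_nat q)^2 / (of_nat p * of_nat q)"

definition hpq :: "nat \<Rightarrow> nat \<Rightarrow> nat \<Rightarrow> nat \<Rightarrow> complex" where
  "hpq p q k l = ((of_nat l * of_nat p - of_nat k * of_nat q)^2 - (of_nat p - of_nat q)^2)
                 / (4 * of_nat p * of_nat q)"

text \<open>Partitions j_1 \<ge> ... \<ge> j_u \<ge> 1 (index lists of PBW monomials L_{-j_1}...L_{-j_u}).\<close>
definition is_part :: "nat list \<Rightarrow> bool" where
  "is_part J \<longleftrightarrow> sorted_wrt (\<ge>) J \<and> (\<forall>j\<in>set J. 1 \<le> j)"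

text \<open>Witt module F_{lam,mu}: elements are coefficient functions int => complex
  (f_j is the indicator of j).  l_n f_j = (mu + j + lam (n-1)) f_{j-n},
  i.e. l_{-i} f_j = (mu + j - lam (i+1)) f_{j+i}.\<close>
definition witt_l :: "complex \<Rightarrow> complex \<Rightarrow> int \<Rightarrow> (int \<Rightarrow> complex) \<Rightarrow> (int \<Rightarrow> complex)" where
  "witt_l lam mu n f = (\<lambda>k. (mu + of_int (k + n) + lam * of_int (n - 1)) * f (k + n))"

definition witt_basis :: "int \<Rightarrow> (int \<Rightarrow> complex)" where
  "witt_basis j = (\<lambda>k. if k = j then 1 else 0)"

definition witt_sigma :: "(nat list \<Rightarrow> complex) \<Rightarrow> complex \<Rightarrow> complex \<Rightarrow> (int \<Rightarrow> complex)" where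
  "witt_sigma rho lam mu =
     (\<lambda>k. \<Sum>J\<in>{J. rho J \<noteq> 0}. rho J * foldr (\<lambda>j f. witt_l lam mu (- int j) f) J (witt_basis 0) k)"

definition witt_rho :: "(nat list \<Rightarrow> complex) \<Rightarrow> nat \<Rightarrow> complex \<Rightarrow> complex \<Rightarrow> complex" where
  "witt_rho rho n lam mu = witt_sigma rho lam mu (int n)"

definition vir_module :: "complex \<Rightarrow> (complex \<Rightarrow> 'a::ab_group_add \<Rightarrow> 'a) \<Rightarrow> (int \<Rightarrow> 'a \<Rightarrow> 'a) \<Rightarrow> bool" where
  "vir_module c sc L \<longleftrightarrow> Vector_Spaces.vector_space sc \<and>
     (\<forall>n. Vector_Spaces.linear sc sc (L n)) \<and>
     (\<forall>n m w. L n (L m w) - L m (L n w) =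
        sc (of_int (n - m)) (L (n + m) w)
        + (if n = - m then sc ((of_int n ^ 3 - of_int n) / 12 * c) w else 0))"

definition word_act :: "(int \<Rightarrow> 'a \<Rightarrow> 'a) \<Rightarrow> nat list \<Rightarrow> 'a \<Rightarrow> 'a" where
  "word_act L J w = foldr (\<lambda>j x. L (- int j) x) J w"

definition sigma_act :: "(complex \<Rightarrow> 'a::ab_group_add \<Rightarrow> 'a) \<Rightarrow> (int \<Rightarrow> 'a \<Rightarrow> 'a)
    \<Rightarrow> (nat list \<Rightarrow> complex) \<Rightarrow> 'a \<Rightarrow> 'a" where
  "sigma_act sc L rho w = (\<Sum>J\<in>{J. rho J \<noteq> 0}. sc (rho J) (word_act L J w))"

definition singular_vec :: "(complex \<Rightarrow> 'a::ab_group_add \<Rightarrow> 'a) \<Rightarrow> (int \<Rightarrow> 'a \<Rightarrow> 'a) \<Rightarrow> 'a \<Rightarrow> bool" where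
  "singular_vec sc L w \<longleftrightarrow> (\<forall>n>0. L n w = 0) \<and> (\<exists>a. L 0 w = sc a w)"

definition is_verma :: "complex \<Rightarrow> complex \<Rightarrow> (complex \<Rightarrow> 'a::ab_group_add \<Rightarrow> 'a)
    \<Rightarrow> (int \<Rightarrow> 'a \<Rightarrow> 'a) \<Rightarrow> 'a \<Rightarrow> bool" where
  "is_verma c h sc L v \<longleftrightarrow> vir_module c sc L \<and> L 0 v = sc h v \<and> (\<forall>n>0. L n v = 0) \<and>
     module.span sc ((\<lambda>J. word_act L J v) ` {J. is_part J}) = UNIV \<and>
     \<not> module.dependent sc ((\<lambda>J. word_act L J v) ` {J. is_part J}) \<and>
     inj_on (\<lambda>J. word_act L J v) {J. is_part J}"

definition is_irr_hw :: "complex \<Rightarrow> complex \<Rightarrow> (complex \<Rightarrow> 'a::ab_group_add \<Rightarrow> 'a)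
    \<Rightarrow> (int \<Rightarrow> 'a \<Rightarrow> 'a) \<Rightarrow> bool" where
  "is_irr_hw c h sc L \<longleftrightarrow> vir_module c sc L \<and>
     (\<exists>w. w \<noteq> 0 \<and> L 0 w = sc h w \<and> (\<forall>n>0. L n w = 0)) \<and>
     (\<forall>U. module.subspace sc U \<and> (\<forall>n. L n ` U \<subseteq> U) \<and> U \<noteq> {0} \<longrightarrow> U = UNIV)"

text \<open>Vir^c has PBW basis L_{-j_1}...L_{-j_u} 1 with j_1 \<ge> ... \<ge> j_u \<ge> 2; its elements are
  finitely supported coefficient functions on such lists.\<close>
definition virc_basis :: "nat list \<Rightarrow> bool" where
  "virc_basis J \<longleftrightarrow> sorted_wrt (\<ge>) J \<and> (\<forall>j\<in>set J. 2 \<le> j)"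

definition virc_elem :: "(nat list \<Rightarrow> complex) \<Rightarrow> bool" where
  "virc_elem v \<longleftrightarrow> finite {J. v J \<noteq> 0} \<and> (\<forall>J. v J \<noteq> 0 \<longrightarrow> virc_basis J)"

text \<open>Modes u_(n) of u = L_{-j_1}...L_{-j_u} 1 on a module, where omega_(k) = L_{k-1},
  1_(n) = delta_{n,-1} id, and (omega_(p) b)_(n) is given by the iterate formula
  sum_i (-1)^i (p choose i) (omega_(p-i) b_(n+i) - (-1)^p b_(p+n-i) omega_(i)),
  a sum with finitely many nonzero terms on each vector.\<close>
fun vmode :: "(complex \<Rightarrow> 'a::ab_group_add \<Rightarrow> 'a) \<Rightarrow> (int \<Rightarrow> 'a \<Rightarrow> 'a) \<Rightarrow> nat list \<Rightarrow> int \<Rightarrow> 'a \<Rightarrow> 'a" where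
  "vmode sc L [] n w = (if n = -1 then w else 0)"
| "vmode sc L (j # J) n w =
     (let p = 1 - int j;
          T = (\<lambda>i::nat. sc ((-1) ^ i * ((of_int p :: complex) gchoose i))
                 (L (p - int i - 1) (vmode sc L J (n + int i) w)
                  - sc ((-1) powi p) (vmode sc L J (p + n - int i) (L (int i - 1) w))))
      in \<Sum>i\<in>{i. T i \<noteq> 0}. T i)"

definition vop :: "(complex \<Rightarrow> 'a::ab_group_add \<Rightarrow> 'a) \<Rightarrow> (int \<Rightarrow> 'a \<Rightarrow> 'a)
    \<Rightarrow> (nat list \<Rightarrow> complex) \<Rightarrow> int \<Rightarrow> 'a \<Rightarrow> 'a" where
  "vop sc L v n w = (\<Sum>J\<in>{J. v J \<noteq> 0}. sc (v J) (vmode sc L J n w))"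

text \<open>Y a n b is the coefficient a_(n) b (n complex) of Y(a,z)b = sum_n a_(n) b z^{-n-1}.\<close>
definition intertwining ::
  "complex \<Rightarrow> (complex \<Rightarrow> 'a::ab_group_add \<Rightarrow> 'a) \<Rightarrow> (int \<Rightarrow> 'a \<Rightarrow> 'a)
   \<Rightarrow> (complex \<Rightarrow> 'b::ab_group_add \<Rightarrow> 'b) \<Rightarrow> (int \<Rightarrow> 'b \<Rightarrow> 'b)
   \<Rightarrow> (complex \<Rightarrow> 'c::ab_group_add \<Rightarrow> 'c) \<Rightarrow> (int \<Rightarrow> 'c \<Rightarrow> 'c)
   \<Rightarrow> ('a \<Rightarrow> complex \<Rightarrow> 'b \<Rightarrow> 'c) \<Rightarrow> bool" where
  "intertwining c sc1 L1 sc2 L2 sc3 L3 Y \<longleftrightarrow>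
     (\<forall>n b. Vector_Spaces.linear sc1 sc3 (\<lambda>a. Y a n b)) \<and>
     (\<forall>a n. Vector_Spaces.linear sc2 sc3 (\<lambda>b. Y a n b)) \<and>
     (\<exists>S F. (\<forall>d\<in>S. d + 1 \<in> S \<and> d - 1 \<in> S) \<and> finite F \<and>
            S \<subseteq> {d + of_int m | d m. d \<in> F} \<and>
            (\<forall>a b. \<exists>D. finite D \<and> D \<subseteq> S \<and>
               (\<forall>n. Y a n b \<noteq> 0 \<longrightarrow> (\<exists>d\<in>D. \<exists>i::nat. - n - 1 = - d + of_nat i)))) \<and>
     (\<forall>a n b. L3 (-1) (Y a n b) - Y a n (L2 (-1) b) = Y (L1 (-1) a) n b) \<and>
     (\<forall>a n b. Y (L1 (-1) a) n b = sc3 (- n) (Y a (n - 1) b)) \<and>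
     (\<forall>v a b (n::int) (m::int) k'. virc_elem v \<longrightarrow>
        (let T1 = (\<lambda>j::nat. sc3 ((-1) ^ j * ((of_int n :: complex) gchoose j))
                     (vop sc3 L3 v (m + n - int j) (Y a (k' + of_nat j) b)
                      - sc3 ((-1) powi n) (Y a (of_int n + k' - of_nat j) (vop sc2 L2 v (m + int j) b))));
             T2 = (\<lambda>j::nat. sc3 ((of_int m :: complex) gchoose j)
                     (Y (vop sc1 L1 v (n + int j) a) (of_int m + k' - of_nat j) b))
         in (\<Sum>j\<in>{j. T1 j \<noteq> 0}. T1 j) = (\<Sum>j\<in>{j. T2 j \<noteq> 0}. T2 j)))"

end

theory Submission
  imports Defs "HOL-Library.Product_Plus"
begin

locale virm = vector_space sc
  for sc :: "complex \<Rightarrow> 'a::ab_group_add \<Rightarrow> 'a" +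
  fixes L :: "int \<Rightarrow> 'a \<Rightarrow> 'a" and c :: complex
  assumes Llin: "Vector_Spaces.linear sc sc (L n)"
    and Lcomm: "L n (L m w) - L m (L n w) = sc (of_int (n - m)) (L (n + m) w)
        + (if n = - m then sc ((of_int n ^ 3 - of_int n) / 12 * c) w else 0)"
begin

lemma Lhom: "module_hom sc sc (L n)"
  using Llin[of n] by (simp add: linear_iff_module_hom)

lemma L_add: "L n (x + y) = L n x + L n y" using module_hom.add[OF Lhom] .
lemma L_scale: "L n (sc a x) = sc a (L n x)" using module_hom.scale[OF Lhom] .
lemma L_zero[simp]: "L n 0 = 0" using module_hom.zero[OF Lhom] .
lemma L_diff: "L n (x - y) = L n x - L n y" using module_hom.diff[OF Lhom] .
lemma L_sum: "L n (sum f A) = (\<Sum>a\<in>A. L n (f a))" using module_hom.sum[OF Lhom] .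

lemma Lcomm': "L n (L m w) = L m (L n w) + sc (of_int (n - m)) (L (n + m) w)
        + (if n = - m then sc ((of_int n ^ 3 - of_int n) / 12 * c) w else 0)"
  using Lcomm[of n m w] by (simp add: algebra_simps)

lemma hom_span:
  assumes "module_hom sc sc f" "f ` S \<subseteq> span T" "u \<in> span S"
  shows "f u \<in> span T"
proof -
  have "f u \<in> f ` span S" using assms(3) by blast
  also have "\<dots> = span (f ` S)" using module_hom.span_image[OF assms(1)] by simp
  also have "\<dots> \<subseteq> span T" using assms(2) by (metis span_mono span_span)
  finally show ?thesis .
qed

lemma word_Cons: "word_act L (j # J) w = L (- int j) (word_act L J w)"
  by (simp add: word_act_def)
lemma word_Nil: "word_act L [] w = w"
  by (simp add: word_act_def)

lemma word_weight:
  assumes "L 0 w = sc e w"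
  shows "L 0 (word_act L J w) = sc (e + of_nat (sum_list J)) (word_act L J w)"
proof (induction J)
  case Nil then show ?case by (simp add: word_Nil assms)
next
  case (Cons j J)
  let ?x = "word_act L J w"
  have "L 0 (L (- int j) ?x) = L (- int j) (L 0 ?x) + sc (of_nat j) (L (- int j) ?x)"
    using Lcomm'[of 0 "- int j" ?x] by (cases "j = 0") auto
  also have "\<dots> = sc (e + of_nat (sum_list J)) (L (- int j) ?x) + sc (of_nat j) (L (- int j) ?x)"
    using Cons by (simp add: L_scale)
  also have "\<dots> = sc (e + of_nat (sum_list J) + of_nat j) (L (- int j) ?x)"
    by (simp only: scale_left_distrib)
  finally show ?case by (simp add: word_Cons add_ac)
qed


definition PW :: "'a \<Rightarrow> 'a set" where
  "PW w = (\<lambda>P. word_act L P w) ` {P. is_part P}"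
definition PWd :: "'a \<Rightarrow> nat \<Rightarrow> nat \<Rightarrow> 'a set" where
  "PWd w d l = (\<lambda>P. word_act L P w) ` {P. is_part P \<and> sum_list P = d \<and> length P \<le> l}"

lemma PWd_mono: "l \<le> l' \<Longrightarrow> span (PWd w d l) \<subseteq> span (PWd w d l')"
  by (rule span_mono) (auto simp: PWd_def)
lemma PWd_PW: "span (PWd w d l) \<subseteq> span (PW w)"
  by (rule span_mono) (auto simp: PWd_def PW_def)

lemma is_part_Cons: "is_part (a # Q) \<longleftrightarrow> (\<forall>x\<in>set Q. x \<le> a) \<and> 1 \<le> a \<and> is_part Q"
  by (auto simp: is_part_def)

lemma neg_claim:
  assumes "is_part Q" "1 \<le> a"
  shows "L (- int a) (word_act L Q w) \<in> span (PWd w (a + sum_list Q) (length Q + 1))"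
  using assms
proof (induction Q arbitrary: a rule: wf_induct[OF wf_measures[of "[length, sum_list]"]])
  case (1 Q)
  show ?case
  proof (cases Q)
    case Nil
    have "word_act L [a] w \<in> PWd w (a + sum_list Q) (length Q + 1)"
      using Nil 1 by (auto simp: PWd_def is_part_def)
    then show ?thesis using Nil by (simp add: word_Cons word_Nil span_base)
  next
    case (Cons q Q')
    show ?thesis
    proof (cases "q \<le> a")
      case True
      have "is_part (a # Q)" using 1 True Cons by (auto simp: is_part_Cons)
      then have "word_act L (a # Q) w \<in> PWd w (a + sum_list Q) (length Q + 1)"
        by (auto simp: PWd_def)
      then show ?thesis by (simp add: word_Cons span_base)
    next
      case False
      let ?y = "word_act L Q' w"
      let ?T = "span (PWd w (a + sum_list Q) (length Q + 1))"
      have pQ': "is_part Q'" and q1: "1 \<le> q" using 1 Cons by (auto simp: is_part_Cons)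
      have eq: "L (- int a) (L (- int q) ?y) = L (- int q) (L (- int a) ?y)
          + sc (of_int (int q - int a)) (L (- int a - int q) ?y)"
        using Lcomm'[of "- int a" "- int q" ?y] 1(3) q1 by simp
      have lt: "(Q', Q) \<in> measures [length, sum_list]" using Cons by simp
      have IH1: "L (- int a) ?y \<in> span (PWd w (a + sum_list Q') (length Q' + 1))"
        using 1(1)[rule_format, OF lt pQ' 1(3)] .
      have T1: "L (- int q) (L (- int a) ?y) \<in> ?T"
      proof (rule hom_span[OF Lhom _ IH1])
        show "L (- int q) ` PWd w (a + sum_list Q') (length Q' + 1) \<subseteq> ?T"
        proof
          fix z assume "z \<in> L (- int q) ` PWd w (a + sum_list Q') (length Q' + 1)"
          then obtain R where R: "is_part R" "sum_list R = a + sum_list Q'" "length R \<le> length Q' + 1"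
            and z: "z = L (- int q) (word_act L R w)" by (auto simp: PWd_def)
          have "(R, Q) \<in> measures [length, sum_list]"
            using R Cons False by auto
          then have "z \<in> span (PWd w (q + sum_list R) (length R + 1))"
            using 1(1)[rule_format, OF _ R(1) q1] z by blast
          also have "\<dots> \<subseteq> ?T"
            using PWd_mono[of "length R + 1" "length Q + 1" w "q + sum_list R"] R Cons by (simp add: add_ac)
          finally show "z \<in> ?T" .
        qed
      qed
      have "L (- int (a + q)) ?y \<in> span (PWd w (a + q + sum_list Q') (length Q' + 1))"
        using 1(1)[rule_format, OF lt pQ', of "a + q"] 1(3) by simp
      also have "\<dots> \<subseteq> ?T"
        using PWd_mono[of "length Q' + 1" "length Q + 1" w] Cons by (auto simp: add_ac)
      finally have T2: "L (- int a - int q) ?y \<in> ?T" by (simp add: algebra_simps)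
      have "L (- int a) (word_act L Q w) = L (- int a) (L (- int q) ?y)"
        using Cons by (simp add: word_Cons)
      then show ?thesis using eq T1 T2 by (simp add: span_add span_scale)
    qed
  qed
qed

lemma neg_span:
  assumes "1 \<le> a" "u \<in> span (PW w)"
  shows "L (- int a) u \<in> span (PW w)"
proof (rule hom_span[OF Lhom _ assms(2)])
  show "L (- int a) ` PW w \<subseteq> span (PW w)"
    using neg_claim[OF _ assms(1)] PWd_PW by (fastforce simp: PW_def)
qed

lemma nonneg_claim:
  assumes hw: "L 0 w = sc e w" "\<forall>n>0. L n w = 0"
  shows "is_part P \<Longrightarrow> 0 \<le> n \<Longrightarrow> L n (word_act L P w) \<in> span (PW w)"
proof (induction P arbitrary: n)
  case Nil
  have w: "w \<in> span (PW w)" by (rule span_base) (auto simp: PW_def is_part_def word_Nil intro: image_eqI[of _ _ "[]"])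
  show ?case
  proof (cases "n = 0")
    case True then show ?thesis using w hw by (simp add: word_Nil span_scale)
  next
    case False then show ?thesis using hw Nil by (simp add: word_Nil span_zero)
  qed
next
  case (Cons p P)
  let ?y = "word_act L P w"
  have pP: "is_part P" and p1: "1 \<le> p" using Cons by (auto simp: is_part_Cons)
  have y: "?y \<in> span (PW w)" by (rule span_base) (use pP in \<open>auto simp: PW_def\<close>)
  have eq: "L n (L (- int p) ?y) = L (- int p) (L n ?y) + sc (of_int (n + int p)) (L (n - int p) ?y)
     + (if n = int p then sc ((of_int n ^ 3 - of_int n) / 12 * c) ?y else 0)"
    using Lcomm'[of n "- int p" ?y] by simp
  have t1: "L (- int p) (L n ?y) \<in> span (PW w)"
    using neg_span[OF p1] Cons.IH[OF pP Cons(3)] by blast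
  have t2: "L (n - int p) ?y \<in> span (PW w)"
  proof (cases "n - int p < 0")
    case True
    then have "L (n - int p) ?y = L (- int (nat (int p - n))) ?y" by simp
    then show ?thesis using neg_span[of "nat (int p - n)", OF _ y] True by simp
  next
    case False then show ?thesis using Cons.IH[OF pP] by simp
  qed
  have t3: "(if n = int p then sc ((of_int n ^ 3 - of_int n) / 12 * c) ?y else 0) \<in> span (PW w)"
    using y by (simp add: span_scale span_zero)
  show ?case using eq t1 t2 t3 by (simp add: word_Cons span_add span_scale)
qed

lemma PW_inv:
  assumes hw: "L 0 w = sc e w" "\<forall>n>0. L n w = 0"
  assumes "u \<in> span (PW w)"
  shows "L n u \<in> span (PW w)"
proof (cases "n < 0")
  case True
  then have "L n u = L (- int (nat (- n))) u" by simp
  then show ?thesis using neg_span[of "nat (- n)", OF _ assms(3)] True by simp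
next
  case False
  show ?thesis
  proof (rule hom_span[OF Lhom _ assms(3)])
    show "L n ` PW w \<subseteq> span (PW w)"
      using nonneg_claim[OF hw] False by (auto simp: PW_def)
  qed
qed


lemma eig_fin:
  assumes f: "module_hom sc sc f" and "finite F"
    and S: "\<forall>x\<in>F. \<exists>e'. e' \<noteq> e \<and> f x = sc e' x"
  shows "\<forall>u\<in>span F. f u = sc e u \<longrightarrow> u = 0"
  using assms(2,3)
proof (induction F rule: finite_induct)
  case empty then show ?case by (simp add: span_empty)
next
  case (insert x F)
  show ?case
  proof (intro ballI impI)
    fix u assume u: "u \<in> span (insert x F)" and fu: "f u = sc e u"
    obtain k where z: "u - sc k x \<in> span F" using u span_breakdown_eq by blast
    obtain ex where ex: "ex \<noteq> e" "f x = sc ex x" using insert.prems by auto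
    have fF: "f ` F \<subseteq> span F"
    proof
      fix y assume "y \<in> f ` F"
      then obtain y0 where "y0 \<in> F" "y = f y0" by auto
      then show "y \<in> span F" using insert.prems by (metis insertCI span_base span_scale)
    qed
    have fz: "f (u - sc k x) \<in> span F" by (rule hom_span[OF f fF z])
    have "f u - sc ex u = f (u - sc k x) - sc ex (u - sc k x)"
      using ex(2) module_hom.diff[OF f] module_hom.scale[OF f]
      by (simp add: scale_right_diff_distrib scale_left_commute[of ex k x])
    also have "\<dots> \<in> span F" using fz z by (simp add: span_diff span_scale)
    finally have z': "f u - sc ex u \<in> span F" .
    have "f (f u - sc ex u) = sc e (f u - sc ex u)"
      using fu module_hom.diff[OF f] module_hom.scale[OF f]
      by (simp add: scale_right_diff_distrib scale_left_commute[of ex e u])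
    then have "f u - sc ex u = 0" using insert.IH insert.prems z' by auto
    then have "sc (e - ex) u = 0" using fu by (simp add: scale_left_diff_distrib)
    then show "u = 0" using ex(1) by simp
  qed
qed

lemma eig_indep:
  assumes f: "module_hom sc sc f" and S: "\<forall>x\<in>S. \<exists>e'. e' \<noteq> e \<and> f x = sc e' x"
    and u: "u \<in> span S" and fu: "f u = sc e u"
  shows "u = 0"
proof -
  obtain t r where t: "finite t" "t \<subseteq> S" and ueq: "u = (\<Sum>a\<in>t. sc (r a) a)"
    using u unfolding span_explicit by blast
  have "u \<in> span t" unfolding ueq by (intro span_sum span_scale span_base)
  then show ?thesis using eig_fin[OF f t(1)] S t(2) fu by blast
qed

lemma irr_weight:
  assumes irr: "\<forall>U. subspace U \<and> (\<forall>n. L n ` U \<subseteq> U) \<and> U \<noteq> {0} \<longrightarrow> U = UNIV"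
    and y: "y \<noteq> 0" "L 0 y = sc e y" "\<forall>n>0. L n y = 0"
    and w: "w \<noteq> 0" "L 0 w = sc h w"
  shows "\<exists>N::nat. h = e + of_nat N"
proof (rule ccontr)
  assume nN: "\<not> (\<exists>N::nat. h = e + of_nat N)"
  have yU: "y \<in> span (PW y)"
    by (rule span_base) (auto simp: PW_def is_part_def word_Nil intro: image_eqI[of _ _ "[]"])
  have "span (PW y) = UNIV"
    using irr[rule_format, of "span (PW y)"] PW_inv[OF y(2,3)] yU y(1) by blast
  then have wU: "w \<in> span (PW y)" by simp
  have "\<forall>x\<in>PW y. \<exists>e'. e' \<noteq> h \<and> L 0 x = sc e' x"
    using word_weight[OF y(2)] nN by (auto simp: PW_def) (metis of_nat_add add.assoc)
  then have "w = 0" using eig_indep[OF Lhom _ wU w(2)] by blast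
  then show False using w(1) by simp
qed

lemma irr_weight_eq:
  assumes irr: "\<forall>U. subspace U \<and> (\<forall>n. L n ` U \<subseteq> U) \<and> U \<noteq> {0} \<longrightarrow> U = UNIV"
    and y: "y \<noteq> 0" "L 0 y = sc e y" "\<forall>n>0. L n y = 0"
    and w: "w \<noteq> 0" "L 0 w = sc h w" "\<forall>n>0. L n w = 0"
  shows "e = h"
proof -
  obtain N :: nat where N: "h = e + of_nat N" using irr_weight[OF irr y w(1,2)] by blast
  obtain M :: nat where M: "e = h + of_nat M" using irr_weight[OF irr w y(1,2)] by blast
  have "of_nat (N + M) = (0::complex)" using N M by (simp add: add_ac)
  then have "N = 0" by (simp only: of_nat_eq_0_iff)
  then show ?thesis using N by simp
qed

end

lemma vir_module_virm: "vir_module c sc L \<Longrightarrow> virm sc L c"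
  unfolding vir_module_def virm_def virm_axioms_def by auto

definition scP :: "(complex \<Rightarrow> 'm::ab_group_add \<Rightarrow> 'm) \<Rightarrow> (complex \<Rightarrow> 'b::ab_group_add \<Rightarrow> 'b)
   \<Rightarrow> complex \<Rightarrow> 'm \<times> 'b \<Rightarrow> 'm \<times> 'b" where
  "scP s1 s2 a z = (s1 a (fst z), s2 a (snd z))"
definition LP :: "(int \<Rightarrow> 'm \<Rightarrow> 'm) \<Rightarrow> (int \<Rightarrow> 'b \<Rightarrow> 'b) \<Rightarrow> int \<Rightarrow> 'm \<times> 'b \<Rightarrow> 'm \<times> 'b" where
  "LP L1 L2 n z = (L1 n (fst z), L2 n (snd z))"

lemma virm_prod:
  assumes "virm s1 L1 c" "virm s2 L2 c"
  shows "virm (scP s1 s2) (LP L1 L2) c"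
proof -
  interpret A: virm s1 L1 c by fact
  interpret B: virm s2 L2 c by fact
  interpret P: vector_space "scP s1 s2"
    by unfold_locales (auto simp: scP_def prod_eq_iff A.scale_right_distrib B.scale_right_distrib
        A.scale_left_distrib B.scale_left_distrib)
  have lin: "Vector_Spaces.linear (scP s1 s2) (scP s1 s2) (LP L1 L2 n)" for n
    unfolding Vector_Spaces.linear_iff
    by (auto simp: P.vector_space_axioms A.vector_space_axioms B.vector_space_axioms LP_def scP_def prod_eq_iff A.L_add B.L_add A.L_scale B.L_scale)
  have comm: "LP L1 L2 n (LP L1 L2 m w) - LP L1 L2 m (LP L1 L2 n w) =
       scP s1 s2 (of_int (n - m)) (LP L1 L2 (n + m) w) +
       (if n = - m then scP s1 s2 ((of_int n ^ 3 - of_int n) / 12 * c) w else 0)" for n m w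
      using A.Lcomm[of n m "fst w"] B.Lcomm[of n m "snd w"]
      by (cases "n = - m") (auto simp: LP_def scP_def prod_eq_iff)
  show ?thesis unfolding virm_def virm_axioms_def
    using P.vector_space_axioms lin comm by blast
qed

lemma word_LP: "word_act (LP L1 L2) J z = (word_act L1 J (fst z), word_act L2 J (snd z))"
  by (induction J) (auto simp: word_act_def LP_def)

lemma stepA:
  fixes scM :: "complex \<Rightarrow> 'm::ab_group_add \<Rightarrow> 'm" and sc2 :: "complex \<Rightarrow> 'b::ab_group_add \<Rightarrow> 'b"
  assumes V: "is_verma c h2 scM LM vM"
    and L2: "vir_module c sc2 L2"
    and irr2: "\<forall>U. module.subspace sc2 U \<and> (\<forall>n. L2 n ` U \<subseteq> U) \<and> U \<noteq> {0} \<longrightarrow> U = UNIV"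
    and w2: "w2 \<noteq> 0" "L2 0 w2 = sc2 h2 w2" "\<forall>n>0. L2 n w2 = 0"
    and rho: "\<forall>J. rho J \<noteq> 0 \<longrightarrow> is_part J \<and> sum_list J = d" and d: "1 \<le> d"
    and sing: "singular_vec scM LM (sigma_act scM LM rho vM)"
  shows "sigma_act sc2 L2 rho w2 = 0"
proof -
  have vmM: "vir_module c scM LM" and hwM: "LM 0 vM = scM h2 vM" "\<forall>n>0. LM n vM = 0"
    and indep: "\<not> module.dependent scM ((\<lambda>J. word_act LM J vM) ` {J. is_part J})"
    and inj: "inj_on (\<lambda>J. word_act LM J vM) {J. is_part J}"
    using V by (auto simp: is_verma_def)
  interpret M: virm scM LM c using vir_module_virm[OF vmM] .
  interpret N: virm sc2 L2 c using vir_module_virm[OF L2] .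
  interpret P: virm "scP scM sc2" "LP LM L2" c using virm_prod[OF M.virm_axioms N.virm_axioms] .
  interpret VP: vector_space_pair scM sc2 by unfold_locales
  let ?B = "(\<lambda>J. word_act LM J vM) ` {J. is_part J}"
  define g where "g b = word_act L2 (inv_into {J. is_part J} (\<lambda>J. word_act LM J vM) b) w2" for b
  define \<Phi> where "\<Phi> = VP.construct ?B g"
  have linPhi: "Vector_Spaces.linear scM sc2 \<Phi>" unfolding \<Phi>_def
    by (rule VP.linear_construct) (use indep in simp)
  have homPhi: "module_hom scM sc2 \<Phi>" using linPhi by (simp add: linear_iff_module_hom)
  have Phib: "\<Phi> (word_act LM J vM) = word_act L2 J w2" if "is_part J" for J
  proof -
    have "\<Phi> (word_act LM J vM) = g (word_act LM J vM)" unfolding \<Phi>_def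
      by (rule VP.construct_basis) (use indep that in auto)
    also have "\<dots> = word_act L2 J w2" unfolding g_def using inv_into_f_f[OF inj] that by simp
    finally show ?thesis .
  qed
  define G where "G = {z. snd z = \<Phi> (fst z)}"
  have subG: "P.subspace G"
    unfolding P.subspace_def G_def
    using module_hom.zero[OF homPhi] module_hom.add[OF homPhi] module_hom.scale[OF homPhi]
    by (auto simp: scP_def)
  have PWG: "P.span (P.PW (vM, w2)) \<subseteq> G"
    by (rule P.span_minimal[OF _ subG]) (auto simp: P.PW_def word_LP G_def Phib)
  define x where "x = sigma_act sc2 L2 rho w2"
  have sigP: "sigma_act (scP scM sc2) (LP LM L2) rho (vM, w2) = (sigma_act scM LM rho vM, x)"
    unfolding sigma_act_def x_def by (simp add: prod_eq_iff fst_sum snd_sum scP_def word_LP)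
  have sigPin: "sigma_act (scP scM sc2) (LP LM L2) rho (vM, w2) \<in> P.span (P.PW (vM, w2))"
    unfolding sigma_act_def
  proof (intro P.span_sum P.span_scale P.span_base)
    fix J assume "J \<in> {J. rho J \<noteq> 0}"
    then show "word_act (LP LM L2) J (vM, w2) \<in> P.PW (vM, w2)"
      using rho by (auto simp: P.PW_def)
  qed
  have hwP: "LP LM L2 0 (vM, w2) = scP scM sc2 h2 (vM, w2)" "\<forall>n>0. LP LM L2 n (vM, w2) = 0"
    using hwM w2 by (auto simp: LP_def scP_def zero_prod_def)
  have xsing: "\<forall>n>0. L2 n x = 0"
  proof (intro allI impI)
    fix n :: int assume n: "n > 0"
    have "LP LM L2 n (sigma_act (scP scM sc2) (LP LM L2) rho (vM, w2)) \<in> G"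
      using P.PW_inv[OF hwP sigPin] PWG by blast
    then have "L2 n x = \<Phi> (LM n (sigma_act scM LM rho vM))"
      by (simp add: sigP G_def LP_def)
    also have "\<dots> = 0" using sing n module_hom.zero[OF homPhi] by (simp add: singular_vec_def)
    finally show "L2 n x = 0" .
  qed
  have xw: "L2 0 x = sc2 (h2 + of_nat d) x"
  proof -
    have "L2 0 x = (\<Sum>J\<in>{J. rho J \<noteq> 0}. sc2 (rho J) (L2 0 (word_act L2 J w2)))"
      unfolding x_def sigma_act_def by (simp add: N.L_sum N.L_scale)
    also have "\<dots> = (\<Sum>J\<in>{J. rho J \<noteq> 0}. sc2 (h2 + of_nat d) (sc2 (rho J) (word_act L2 J w2)))"
      by (rule sum.cong) (use rho in \<open>auto simp: N.word_weight[OF w2(2)] mult.commute\<close>)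
    also have "\<dots> = sc2 (h2 + of_nat d) x"
      unfolding x_def sigma_act_def by (simp add: N.scale_sum_right)
    finally show ?thesis .
  qed
  show ?thesis
  proof (rule ccontr)
    assume "sigma_act sc2 L2 rho w2 \<noteq> 0"
    then have "x \<noteq> 0" by (simp add: x_def)
    from N.irr_weight[OF irr2 this xw xsing w2(1,2)] obtain K :: nat
      where "h2 = h2 + of_nat d + of_nat K" by blast
    then have "of_nat (d + K) = (0::complex)" by simp
    then have "d + K = 0" by (simp only: of_nat_eq_0_iff)
    then show False using d by simp
  qed
qed


lemma gchoose_m1: "((-1::complex) gchoose k) = (-1) ^ k"
proof -
  have "((-1::complex) gchoose k) = (-1) ^ k * ((1 + of_nat k - 1) gchoose k)"
    using gbinomial_minus[of "1::complex" k] by simp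
  also have "(1 + of_nat k - 1 :: complex) = of_nat k" by simp
  also have "(of_nat k gchoose k :: complex) = 1"
    using binomial_gbinomial[of k k, where 'a=complex] by simp
  finally show ?thesis by simp
qed

lemma sum_nz:
  assumes "finite F" "\<And>j. j \<notin> F \<Longrightarrow> T j = 0"
  shows "(\<Sum>j\<in>{j. T j \<noteq> 0}. T j) = (\<Sum>j\<in>F. T j)"
  by (rule sum.mono_neutral_left) (use assms in auto)

definition omega :: "nat list \<Rightarrow> complex" where
  "omega J = (if J = [2] then 1 else 0)"

lemma virc_omega: "virc_elem omega"
  by (auto simp: virc_elem_def omega_def virc_basis_def)

context virm begin

lemma vmode2: "vmode sc L [2] n w = L (n - 1) w"
proof -
  define TT where "TT = (\<lambda>i::nat. sc ((-1)^i * ((of_int (1 - int 2) :: complex) gchoose i))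
     (L ((1 - int 2) - int i - 1) (vmode sc L [] (n + int i) w)
      - sc ((-1) powi (1 - int 2)) (vmode sc L [] ((1 - int 2) + n - int i) (L (int i - 1) w))))"
  have v: "vmode sc L [2] n w = (\<Sum>i\<in>{i. TT i \<noteq> 0}. TT i)"
    by (simp only: vmode.simps Let_def TT_def)
  define i0 where "i0 = nat (if n \<ge> 0 then n else -1-n)"
  have TT: "TT i = (if i = i0 then L (n - 1) w else 0)" for i
  proof -
    have c1: "(-1::complex)^i * ((of_int (1 - int 2) :: complex) gchoose i) = 1"
      by (simp add: gchoose_m1 power_mult_distrib[symmetric])
    have c2: "((-1::complex) powi (1 - int 2)) = -1" by (simp add: power_int_minus)
    show ?thesis unfolding TT_def c1 c2 i0_def by (auto simp: algebra_simps)
  qed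
  have "(\<Sum>i\<in>{i. TT i \<noteq> 0}. TT i) = (\<Sum>i\<in>{i0}. TT i)"
    by (rule sum_nz) (auto simp: TT)
  then show ?thesis using v by (simp add: TT)
qed

lemma vop_omega: "vop sc L omega n w = L (n - 1) w"
proof -
  have "{J. omega J \<noteq> 0} = {[2]}" by (auto simp: omega_def)
  then show ?thesis unfolding vop_def by (simp add: vmode2 del: vmode.simps) (simp add: omega_def)
qed

end


fun Cw :: "complex \<Rightarrow> complex \<Rightarrow> nat list \<Rightarrow> complex" where
  "Cw lam mu [] = 1"
| "Cw lam mu (j # J) = (mu + of_nat (sum_list J) - lam * (of_nat j + 1)) * Cw lam mu J"

lemma witt_fold:
  "foldr (\<lambda>j f. witt_l lam mu (- int j) f) J (witt_basis 0) =
     (\<lambda>k. if k = int (sum_list J) then Cw lam mu J else 0)"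
proof (induction J)
  case Nil then show ?case by (rule ext) (simp add: witt_basis_def)
next
  case (Cons j J)
  show ?case
  proof
    fix k
    show "foldr (\<lambda>j f. witt_l lam mu (- int j) f) (j # J) (witt_basis 0) k =
      (if k = int (sum_list (j # J)) then Cw lam mu (j # J) else 0)"
      using Cons by (auto simp: witt_l_def algebra_simps)
  qed
qed

lemma stepB:
  fixes sc1 :: "complex \<Rightarrow> 'a::ab_group_add \<Rightarrow> 'a" and sc2 :: "complex \<Rightarrow> 'b::ab_group_add \<Rightarrow> 'b"
    and sc3 :: "complex \<Rightarrow> 'c::ab_group_add \<Rightarrow> 'c"
  assumes V1: "virm sc1 L1 c" and V2: "virm sc2 L2 c" and V3: "virm sc3 L3 c"
    and irr1: "\<forall>U. module.subspace sc1 U \<and> (\<forall>n. L1 n ` U \<subseteq> U) \<and> U \<noteq> {0} \<longrightarrow> U = UNIV"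
    and irr2: "\<forall>U. module.subspace sc2 U \<and> (\<forall>n. L2 n ` U \<subseteq> U) \<and> U \<noteq> {0} \<longrightarrow> U = UNIV"
    and irr3: "\<forall>U. module.subspace sc3 U \<and> (\<forall>n. L3 n ` U \<subseteq> U) \<and> U \<noteq> {0} \<longrightarrow> U = UNIV"
    and w1: "w1 \<noteq> 0" "L1 0 w1 = sc1 h1 w1" "\<forall>n>0. L1 n w1 = 0"
    and w2: "w2 \<noteq> 0" "L2 0 w2 = sc2 h2 w2" "\<forall>n>0. L2 n w2 = 0"
    and w3: "w3 \<noteq> 0" "L3 0 w3 = sc3 h w3" "\<forall>n>0. L3 n w3 = 0"
    and Y: "intertwining c sc1 L1 sc2 L2 sc3 L3 Y" and Ynz: "Y a0 n0 b0 \<noteq> 0"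
    and rho: "\<forall>J. rho J \<noteq> 0 \<longrightarrow> is_part J \<and> sum_list J = d"
    and sig0: "sigma_act sc2 L2 rho w2 = 0"
  shows "witt_rho rho d (- h1) (h2 - h - h1) = 0"
proof -
  interpret A1: virm sc1 L1 c by fact
  interpret A2: virm sc2 L2 c by fact
  interpret A3: virm sc3 L3 c by fact
  have linA: "module_hom sc1 sc3 (\<lambda>a. Y a n b)" for n b
    using Y by (simp add: intertwining_def linear_iff_module_hom)
  have linB: "module_hom sc2 sc3 (\<lambda>b. Y a n b)" for a n
    using Y by (simp add: intertwining_def linear_iff_module_hom)
  have trunc: "\<forall>a b. \<exists>D. finite D \<and> (\<forall>n. Y a n b \<noteq> 0 \<longrightarrow> (\<exists>d\<in>D. \<exists>i::nat. - n - 1 = - d + of_nat i))"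
  proof -
    have "\<exists>S F. (\<forall>d\<in>S. d + 1 \<in> S \<and> d - 1 \<in> S) \<and> finite F \<and>
            S \<subseteq> {d + of_int m | d m. d \<in> F} \<and>
            (\<forall>a b. \<exists>D. finite D \<and> D \<subseteq> S \<and>
               (\<forall>n. Y a n b \<noteq> 0 \<longrightarrow> (\<exists>d\<in>D. \<exists>i::nat. - n - 1 = - d + of_nat i)))"
      using Y unfolding intertwining_def by (elim conjE) assumption
    then show ?thesis by blast
  qed
  have der: "Y (L1 (-1) a) n b = sc3 (- n) (Y a (n - 1) b)" for a n b
    using Y by (simp add: intertwining_def)
  have jac: "\<forall>v a b (n::int) (m::int) k'. virc_elem v \<longrightarrow>
        (let T1 = (\<lambda>j::nat. sc3 ((-1) ^ j * ((of_int n :: complex) gchoose j))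
                     (vop sc3 L3 v (m + n - int j) (Y a (k' + of_nat j) b)
                      - sc3 ((-1) powi n) (Y a (of_int n + k' - of_nat j) (vop sc2 L2 v (m + int j) b))));
             T2 = (\<lambda>j::nat. sc3 ((of_int m :: complex) gchoose j)
                     (Y (vop sc1 L1 v (n + int j) a) (of_int m + k' - of_nat j) b))
         in (\<Sum>j\<in>{j. T1 j \<noteq> 0}. T1 j) = (\<Sum>j\<in>{j. T2 j \<noteq> 0}. T2 j))"
    using Y unfolding intertwining_def by blast
  have YA0[simp]: "Y 0 n b = 0" for n b using module_hom.zero[OF linA] .
  have YB0[simp]: "Y a n 0 = 0" for a n using module_hom.zero[OF linB] .
  have YAs: "Y (sc1 t a) n b = sc3 t (Y a n b)" for t a n b using module_hom.scale[OF linA] .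
  have YBs: "Y a n (sc2 t b) = sc3 t (Y a n b)" for t a n b using module_hom.scale[OF linB] .
  have comm: "L3 n (Y w1 k b) = Y w1 k (L2 n b)
      + sc3 ((of_int n + 1) * h1 - (of_int n + 1) - k) (Y w1 (of_int n + k) b)" for n k b
  proof -
    define T1 where "T1 = (\<lambda>j::nat. sc3 ((-1) ^ j * ((of_int 0 :: complex) gchoose j))
                     (vop sc3 L3 omega ((n + 1) + 0 - int j) (Y w1 (k + of_nat j) b)
                      - sc3 ((-1) powi 0) (Y w1 (of_int 0 + k - of_nat j) (vop sc2 L2 omega ((n + 1) + int j) b))))"
    define T2 where "T2 = (\<lambda>j::nat. sc3 ((of_int (n + 1) :: complex) gchoose j)
                     (Y (vop sc1 L1 omega (0 + int j) w1) (of_int (n + 1) + k - of_nat j) b))"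
    have J: "(\<Sum>j\<in>{j. T1 j \<noteq> 0}. T1 j) = (\<Sum>j\<in>{j. T2 j \<noteq> 0}. T2 j)"
      using jac[rule_format, where v=omega and a=w1 and b=b and n=0 and m="n + 1" and k'=k, OF virc_omega] by (simp only: Let_def T1_def T2_def)
    have T1: "T1 j = (if j = 0 then L3 n (Y w1 k b) - Y w1 k (L2 n b) else 0)" for j
      by (cases j) (auto simp: T1_def A3.vop_omega A2.vop_omega gbinomial_0_left)
    let ?y = "Y w1 (of_int n + k) b"
    have T2: "T2 j = (if j = 0 then sc3 (- (of_int n + 1 + k)) ?y
       else if j = 1 then sc3 ((of_int n + 1) * h1) ?y else 0)" for j
    proof -
      consider "j = 0" | "j = 1" | "j \<ge> 2" by linarith
      then show ?thesis
      proof cases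
        case 1 then show ?thesis by (simp add: T2_def A1.vop_omega der algebra_simps)
      next
        case 2 then show ?thesis using w1(2) by (simp add: T2_def A1.vop_omega YAs algebra_simps)
      next
        case 3
        then have "L1 (int j - 1) w1 = 0" using w1(3) by simp
        then show ?thesis using 3 by (simp add: T2_def A1.vop_omega)
      qed
    qed
    have s1: "(\<Sum>j\<in>{j. T1 j \<noteq> 0}. T1 j) = L3 n (Y w1 k b) - Y w1 k (L2 n b)"
      using sum_nz[of "{0}" T1] by (simp add: T1)
    have s2: "(\<Sum>j\<in>{j. T2 j \<noteq> 0}. T2 j) = sc3 (- (of_int n + 1 + k)) ?y + sc3 ((of_int n + 1) * h1) ?y"
      using sum_nz[of "{0, 1}" T2] by (simp add: T2)
    have eq: "L3 n (Y w1 k b) - Y w1 k (L2 n b) = sc3 (- (of_int n + 1 + k) + (of_int n + 1) * h1) ?y"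
      using J s1 s2 by (simp only: A3.scale_left_distrib)
    have coef: "- (of_int n + 1 + k) + (of_int n + 1) * h1 = (of_int n + 1) * h1 - (of_int n + 1) - k"
      by (simp add: algebra_simps)
    show ?thesis using eq unfolding coef by (simp add: diff_eq_eq add.commute)
  qed
  have annA: "Y (L1 n a) k b = 0" if a: "\<forall>k b. Y a k b = 0" for a n k b
  proof -
    define T1 where "T1 = (\<lambda>j::nat. sc3 ((-1) ^ j * ((of_int (n + 1) :: complex) gchoose j))
                     (vop sc3 L3 omega (0 + (n + 1) - int j) (Y a (k + of_nat j) b)
                      - sc3 ((-1) powi (n + 1)) (Y a (of_int (n + 1) + k - of_nat j) (vop sc2 L2 omega (0 + int j) b))))"
    define T2 where "T2 = (\<lambda>j::nat. sc3 ((of_int 0 :: complex) gchoose j)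
                     (Y (vop sc1 L1 omega ((n + 1) + int j) a) (of_int 0 + k - of_nat j) b))"
    have J: "(\<Sum>j\<in>{j. T1 j \<noteq> 0}. T1 j) = (\<Sum>j\<in>{j. T2 j \<noteq> 0}. T2 j)"
      using jac[rule_format, where v=omega and a=a and b=b and n="n + 1" and m=0 and k'=k, OF virc_omega] by (simp only: Let_def T1_def T2_def)
    have T1: "T1 j = 0" for j by (simp add: T1_def a A3.vop_omega)
    have T2: "T2 j = (if j = 0 then Y (L1 n a) k b else 0)" for j
      by (cases j) (auto simp: T2_def A1.vop_omega gbinomial_0_left)
    show ?thesis using J sum_nz[of "{0}" T2] by (simp add: T1 T2)
  qed
  have ex1: "\<exists>k b. Y w1 k b \<noteq> 0"
  proof (rule ccontr)
    assume "\<not> (\<exists>k b. Y w1 k b \<noteq> 0)"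
    then have w1A: "w1 \<in> {a. \<forall>k b. Y a k b = 0}" by auto
    have "A1.subspace {a. \<forall>k b. Y a k b = 0}"
      unfolding A1.subspace_def using module_hom.add[OF linA] by (auto simp: YAs)
    moreover have "\<forall>n. L1 n ` {a. \<forall>k b. Y a k b = 0} \<subseteq> {a. \<forall>k b. Y a k b = 0}"
      using annA by blast
    moreover have "{a. \<forall>k b. Y a k b = 0} \<noteq> {0}" using w1A w1(1) by blast
    ultimately have "{a. \<forall>k b. Y a k b = 0} = UNIV" using irr1 by blast
    then show False using Ynz by blast
  qed
  have ex2: "\<exists>k. Y w1 k w2 \<noteq> 0"
  proof (rule ccontr)
    assume "\<not> (\<exists>k. Y w1 k w2 \<noteq> 0)"
    then have w2B: "w2 \<in> {b. \<forall>k. Y w1 k b = 0}" by auto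
    have "A2.subspace {b. \<forall>k. Y w1 k b = 0}"
      unfolding A2.subspace_def using module_hom.add[OF linB] by (auto simp: YBs)
    moreover have "\<forall>n. L2 n ` {b. \<forall>k. Y w1 k b = 0} \<subseteq> {b. \<forall>k. Y w1 k b = 0}"
    proof (intro allI subsetI)
      fix n x assume "x \<in> L2 n ` {b. \<forall>k. Y w1 k b = 0}"
      then obtain b where b: "\<forall>k. Y w1 k b = 0" "x = L2 n b" by auto
      show "x \<in> {b. \<forall>k. Y w1 k b = 0}"
        using comm[of n _ b] b by simp
    qed
    moreover have "{b. \<forall>k. Y w1 k b = 0} \<noteq> {0}" using w2B w2(1) by blast
    ultimately have "{b. \<forall>k. Y w1 k b = 0} = UNIV" using irr2 by blast
    then show False using ex1 by blast
  qed
  obtain k0 where k0: "Y w1 k0 w2 \<noteq> 0" using ex2 by blast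
  obtain D where D: "finite D" "\<forall>n. Y w1 n w2 \<noteq> 0 \<longrightarrow> (\<exists>d\<in>D. \<exists>i::nat. - n - 1 = - d + of_nat i)"
    using trunc by blast
  define NS where "NS = {N::nat. Y w1 (k0 + of_nat N) w2 \<noteq> 0}"
  define Bd where "Bd = (\<Sum>d\<in>D. \<bar>Re d\<bar>)"
  have NSb: "NS \<subseteq> {..nat \<lceil>Bd - Re k0\<rceil>}"
  proof
    fix N assume "N \<in> NS"
    then obtain d i where d: "d \<in> D" and di: "- (k0 + of_nat N) - 1 = - d + of_nat (i::nat)"
      using D(2) unfolding NS_def by blast
    have "of_nat N = d - 1 - of_nat i - k0" using di by (simp add: algebra_simps)
    then have "real N = Re d - 1 - real i - Re k0"
      by (metis Re_complex_of_real of_real_of_nat_eq minus_complex.simps(1) one_complex.simps(1) Re_complex_of_real)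
    moreover have "Re d \<le> Bd" unfolding Bd_def
      using member_le_sum[of d D "\<lambda>d. \<bar>Re d\<bar>"] d D(1) by auto
    ultimately have "real N \<le> Bd - Re k0" by linarith
    then show "N \<in> {..nat \<lceil>Bd - Re k0\<rceil>}" by (simp add: le_nat_iff le_ceiling_iff)
  qed
  have finNS: "finite NS" using NSb finite_subset by blast
  have NS0: "0 \<in> NS" using k0 by (simp add: NS_def)
  define N0 where "N0 = Max NS"
  have N0: "N0 \<in> NS" unfolding N0_def using finNS NS0 Max_in by blast
  define kk where "kk = k0 + of_nat N0"
  define ys where "ys = Y w1 kk w2"
  have ys0: "ys \<noteq> 0" using N0 by (simp add: NS_def ys_def kk_def)
  have above: "Y w1 (kk + of_nat n) w2 = 0" if "n > 0" for n :: nat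
  proof (rule ccontr)
    assume "Y w1 (kk + of_nat n) w2 \<noteq> 0"
    then have "N0 + n \<in> NS" by (simp add: NS_def kk_def add.assoc)
    then have "N0 + n \<le> N0" unfolding N0_def using finNS Max_ge by blast
    then show False using that by simp
  qed
  have ysing: "\<forall>n>0. L3 n ys = 0"
  proof (intro allI impI)
    fix n :: int assume n: "n > 0"
    have "of_int n + kk = kk + of_nat (nat n)" using n by simp
    then show "L3 n ys = 0" unfolding ys_def
      using comm[of n kk w2] w2(3) n above[of "nat n"] by (simp add: add.commute)
  qed
  have yw: "L3 0 ys = sc3 (h2 + h1 - 1 - kk) ys"
  proof -
    have "L3 0 ys = sc3 h2 ys + sc3 (h1 - 1 - kk) ys"
      unfolding ys_def using comm[of 0 kk w2] w2(2) by (simp add: YBs)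
    also have "\<dots> = sc3 (h2 + h1 - 1 - kk) ys"
      by (simp only: A3.scale_left_distrib[symmetric]) (simp add: algebra_simps)
    finally show ?thesis .
  qed
  have hh: "h2 + h1 - 1 - kk = h" using A3.irr_weight_eq[OF irr3 ys0 yw ysing w3] .
  define mu where "mu = kk + 1 - 2 * h1"
  have W: "\<forall>N::nat. Y w1 (kk + of_nat (sum_list J) + of_nat N) (word_act L2 J w2)
      = sc3 (if N = 0 then Cw (- h1) mu J else 0) ys" if "\<forall>j\<in>set J. 1 \<le> j" for J
    using that
  proof (induction J)
    case Nil
    show ?case
    proof
      fix N :: nat
      show "Y w1 (kk + of_nat (sum_list []) + of_nat N) (word_act L2 [] w2)
          = sc3 (if N = 0 then Cw (- h1) mu [] else 0) ys"
        using above[of N] by (cases "N = 0") (auto simp: A2.word_Nil ys_def)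
    qed
  next
    case (Cons j J)
    have j1: "1 \<le> j" and IH: "\<forall>N::nat. Y w1 (kk + of_nat (sum_list J) + of_nat N) (word_act L2 J w2)
      = sc3 (if N = 0 then Cw (- h1) mu J else 0) ys" using Cons by auto
    show ?case
    proof
      fix N :: nat
      let ?X = "word_act L2 J w2"
      let ?k = "kk + of_nat (sum_list (j # J)) + of_nat N"
      have e1: "?k = kk + of_nat (sum_list J) + of_nat (j + N)" by (simp add: algebra_simps)
      have e2: "of_int (- int j) + ?k = kk + of_nat (sum_list J) + of_nat N" by (simp add: algebra_simps)
      have z: "Y w1 ?k ?X = 0" using IH[rule_format, of "j + N"] j1 unfolding e1 by simp
      have c: "L3 (- int j) (Y w1 ?k ?X) = Y w1 ?k (L2 (- int j) ?X)
          + sc3 ((of_int (- int j) + 1) * h1 - (of_int (- int j) + 1) - ?k) (Y w1 (of_int (- int j) + ?k) ?X)"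
        by (rule comm)
      have "Y w1 ?k (word_act L2 (j # J) w2) =
          - sc3 ((of_int (- int j) + 1) * h1 - (of_int (- int j) + 1) - ?k)
              (sc3 (if N = 0 then Cw (- h1) mu J else 0) ys)"
        using c unfolding z e2 IH[rule_format, of N] by (simp add: A2.word_Cons eq_neg_iff_add_eq_0)
      also have "\<dots> = sc3 (if N = 0 then Cw (- h1) mu (j # J) else 0) ys"
      proof (cases "N = 0")
        case True
        have co: "- ((of_int (- int j) + 1) * h1 - (of_int (- int j) + 1) - ?k) * Cw (- h1) mu J
             = Cw (- h1) mu (j # J)"
          using True by (simp add: mu_def algebra_simps)
        have "sc3 (Cw (- h1) mu (j # J)) ys =
            sc3 (- ((of_int (- int j) + 1) * h1 - (of_int (- int j) + 1) - ?k) * Cw (- h1) mu J) ys"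
          by (simp only: co)
        also have "\<dots> = - sc3 ((of_int (- int j) + 1) * h1 - (of_int (- int j) + 1) - ?k)
              (sc3 (Cw (- h1) mu J) ys)" by (simp only: A3.scale_scale mult_minus_left A3.scale_minus_left)
        finally have F: "sc3 (Cw (- h1) mu (j # J)) ys = - sc3 ((of_int (- int j) + 1) * h1 - (of_int (- int j) + 1) - ?k)
              (sc3 (Cw (- h1) mu J) ys)" .
        show ?thesis using F unfolding True by (simp only: if_True simp_thms)
      next
        case False then show ?thesis by simp
      qed
      finally show "Y w1 ?k (word_act L2 (j # J) w2) = sc3 (if N = 0 then Cw (- h1) mu (j # J) else 0) ys" .
    qed
  qed
  show ?thesis
  proof (cases "finite {J. rho J \<noteq> 0}")
    case False
    then show ?thesis by (simp add: witt_rho_def witt_sigma_def)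
  next
    case True
    have "0 = Y w1 (kk + of_nat d) (sigma_act sc2 L2 rho w2)" using sig0 by simp
    also have "\<dots> = (\<Sum>J\<in>{J. rho J \<noteq> 0}. sc3 (rho J) (Y w1 (kk + of_nat d) (word_act L2 J w2)))"
      unfolding sigma_act_def by (simp add: module_hom.sum[OF linB] YBs)
    also have "\<dots> = (\<Sum>J\<in>{J. rho J \<noteq> 0}. sc3 (rho J * Cw (- h1) mu J) ys)"
    proof (rule sum.cong)
      fix J assume "J \<in> {J. rho J \<noteq> 0}"
      then have p: "is_part J" "sum_list J = d" using rho by auto
      then have "\<forall>j\<in>set J. 1 \<le> j" by (simp add: is_part_def)
      from W[OF this, rule_format, of 0] p
      show "sc3 (rho J) (Y w1 (kk + of_nat d) (word_act L2 J w2)) = sc3 (rho J * Cw (- h1) mu J) ys"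
        by simp
    qed simp
    also have "\<dots> = sc3 (\<Sum>J\<in>{J. rho J \<noteq> 0}. rho J * Cw (- h1) mu J) ys"
      by (simp add: A3.scale_sum_left)
    finally have "(\<Sum>J\<in>{J. rho J \<noteq> 0}. rho J * Cw (- h1) mu J) = 0" using ys0 by simp
    moreover have "witt_rho rho d (- h1) (h2 - h - h1) = (\<Sum>J\<in>{J. rho J \<noteq> 0}. rho J * Cw (- h1) mu J)"
    proof -
      have mu': "h2 - h - h1 = mu" using hh by (simp add: mu_def algebra_simps)
      show ?thesis unfolding witt_rho_def witt_sigma_def witt_fold mu'
        by (rule sum.cong) (use rho in auto)
    qed
    ultimately show ?thesis by simp
  qed
qed


theorem mainTheorem12:
  fixes p q k l r s :: nat and h :: complex
    and rho :: "nat list \<Rightarrow> complex"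
    and scM :: "complex \<Rightarrow> 'm::ab_group_add \<Rightarrow> 'm" and LM :: "int \<Rightarrow> 'm \<Rightarrow> 'm" and vM :: 'm
    and sc1 :: "complex \<Rightarrow> 'a::ab_group_add \<Rightarrow> 'a" and L1 :: "int \<Rightarrow> 'a \<Rightarrow> 'a"
    and sc2 :: "complex \<Rightarrow> 'b::ab_group_add \<Rightarrow> 'b" and L2 :: "int \<Rightarrow> 'b \<Rightarrow> 'b"
    and sc3 :: "complex \<Rightarrow> 'c::ab_group_add \<Rightarrow> 'c" and L3 :: "int \<Rightarrow> 'c \<Rightarrow> 'c"
  assumes "2 \<le> p" and "2 \<le> q" and "coprime p q"
    and "0 < k" and "k < p" and "0 < r" and "r < p"
    and "0 < l" and "l < q" and "0 < s" and "s < q"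
    and "\<forall>J. rho J \<noteq> 0 \<longrightarrow> is_part J \<and> sum_list J = r * s"
    and "is_verma (cpq p q) (hpq p q r s) scM LM vM"
    and "sigma_act scM LM rho vM \<noteq> 0"
    and "singular_vec scM LM (sigma_act scM LM rho vM)"
    and "is_irr_hw (cpq p q) (hpq p q k l) sc1 L1"
    and "is_irr_hw (cpq p q) (hpq p q r s) sc2 L2"
    and "is_irr_hw (cpq p q) h sc3 L3"
    and "\<exists>Y. intertwining (cpq p q) sc1 L1 sc2 L2 sc3 L3 Y \<and> (\<exists>a n b. Y a n b \<noteq> 0)"
  shows "witt_rho rho (r * s) (- hpq p q k l) (hpq p q r s - h - hpq p q k l) = 0"
proof -
  note a = assms
  obtain Y a0 n0 b0 where Y: "intertwining (cpq p q) sc1 L1 sc2 L2 sc3 L3 Y" and Ynz: "Y a0 n0 b0 \<noteq> 0"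
    using a(19) by blast
  have vm1: "vir_module (cpq p q) sc1 L1" and irr1: "\<forall>U. module.subspace sc1 U \<and> (\<forall>n. L1 n ` U \<subseteq> U) \<and> U \<noteq> {0} \<longrightarrow> U = UNIV"
    using a(16) by (auto simp: is_irr_hw_def)
  obtain w1 where w1: "w1 \<noteq> 0" "L1 0 w1 = sc1 (hpq p q k l) w1" "\<forall>n>0. L1 n w1 = 0"
    using a(16) by (auto simp: is_irr_hw_def)
  have vm2: "vir_module (cpq p q) sc2 L2" and irr2: "\<forall>U. module.subspace sc2 U \<and> (\<forall>n. L2 n ` U \<subseteq> U) \<and> U \<noteq> {0} \<longrightarrow> U = UNIV"
    using a(17) by (auto simp: is_irr_hw_def)
  obtain w2 where w2: "w2 \<noteq> 0" "L2 0 w2 = sc2 (hpq p q r s) w2" "\<forall>n>0. L2 n w2 = 0"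
    using a(17) by (auto simp: is_irr_hw_def)
  have vm3: "vir_module (cpq p q) sc3 L3" and irr3: "\<forall>U. module.subspace sc3 U \<and> (\<forall>n. L3 n ` U \<subseteq> U) \<and> U \<noteq> {0} \<longrightarrow> U = UNIV"
    using a(18) by (auto simp: is_irr_hw_def)
  obtain w3 where w3: "w3 \<noteq> 0" "L3 0 w3 = sc3 h w3" "\<forall>n>0. L3 n w3 = 0"
    using a(18) by (auto simp: is_irr_hw_def)
  have d: "1 \<le> r * s" using a(6) a(10) by simp
  have sig0: "sigma_act sc2 L2 rho w2 = 0"
    by (rule stepA[OF a(13) vm2 irr2 w2 a(12) d a(15)])
  show ?thesis
    by (rule stepB[OF vir_module_virm[OF vm1] vir_module_virm[OF vm2] vir_module_virm[OF vm3]
          irr1 irr2 irr3 w1 w2 w3 Y Ynz a(12) sig0])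
qed

end
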